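(* For any $\kappa_0>0$ and $\bar d>0$ there is a constant $C_{\kappa_0,\bar d}$ such that for every finite connected graph $\mathcal G=(V,E)$ with maximum degree at most $\bar d$ and $\kappa(\mathcal G)>\kappa_0$, and every $0<t\le|V|$, \[\frac{\max_x\int_0^tp_s(x,x)\,ds}{\min_x\int_0^tp_s(x,x)\,ds}+\max_x\int_0^tp_s(x,x)\,ds<C_{\kappa_0,\bar d}.\]
   Context: $p_s$ is the transition probability of the continuous-time simple random walk on $\mathcal G$ jumping across each incident edge at rate $1$. The vertex expansion constant is $\kappa(\mathcal G)=\min_{0<|S|\le|V|/2}|\partial S|/|S|$, where $\partial S=\{v\in V\setminus S:\exists u\in S,\ u\sim v\}$. *)

theory Defs
  imports "HOL-Analysis.Analysis" "HOL-Library.Extended_Real"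
begin

definition simple_graph :: "nat set \<Rightarrow> (nat \<Rightarrow> nat \<Rightarrow> bool) \<Rightarrow> bool" where
  "simple_graph V E \<longleftrightarrow> finite V \<and> V \<noteq> {} \<and> (\<forall>x y. E x y \<longrightarrow> E y x)
     \<and> (\<forall>x. \<not> E x x) \<and> (\<forall>x y. E x y \<longrightarrow> x \<in> V \<and> y \<in> V)"

definition connected_graph :: "nat set \<Rightarrow> (nat \<Rightarrow> nat \<Rightarrow> bool) \<Rightarrow> bool" where
  "connected_graph V E \<longleftrightarrow> (\<forall>x\<in>V. \<forall>y\<in>V. E\<^sup>*\<^sup>* x y)"

definition degree :: "nat set \<Rightarrow> (nat \<Rightarrow> nat \<Rightarrow> bool) \<Rightarrow> nat \<Rightarrow> nat" where
  "degree V E x = card {y \<in> V. E x y}"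

definition vboundary :: "nat set \<Rightarrow> (nat \<Rightarrow> nat \<Rightarrow> bool) \<Rightarrow> nat set \<Rightarrow> nat set" where
  "vboundary V E S = {v \<in> V - S. \<exists>u\<in>S. E u v}"

text \<open>Vertex expansion constant; the minimum over an empty family is +infinity.\<close>
definition vertex_expansion :: "nat set \<Rightarrow> (nat \<Rightarrow> nat \<Rightarrow> bool) \<Rightarrow> ereal" where
  "vertex_expansion V E = Inf {ereal (real (card (vboundary V E S)) / real (card S)) | S.
      S \<subseteq> V \<and> 0 < card S \<and> real (card S) \<le> real (card V) / 2}"

text \<open>Generator Q = A - D of the continuous-time simple random walk (rate 1 per edge).\<close>
definition generator :: "nat set \<Rightarrow> (nat \<Rightarrow> nat \<Rightarrow> bool) \<Rightarrow> nat \<Rightarrow> nat \<Rightarrow> real" where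
  "generator V E x y = (if E x y then 1 else 0) - (if x = y then real (degree V E x) else 0)"

fun gen_pow :: "nat set \<Rightarrow> (nat \<Rightarrow> nat \<Rightarrow> bool) \<Rightarrow> nat \<Rightarrow> nat \<Rightarrow> nat \<Rightarrow> real" where
  "gen_pow V E 0 x y = (if x = y then 1 else 0)"
| "gen_pow V E (Suc n) x y = (\<Sum>z\<in>V. generator V E x z * gen_pow V E n z y)"

definition heat_kernel :: "nat set \<Rightarrow> (nat \<Rightarrow> nat \<Rightarrow> bool) \<Rightarrow> real \<Rightarrow> nat \<Rightarrow> nat \<Rightarrow> real" where
  "heat_kernel V E s x y = (\<Sum>n. s ^ n / fact n * gen_pow V E n x y)"

end

theory Submission imports Defs begin

definition ee :: "(nat \<Rightarrow> nat \<Rightarrow> bool) \<Rightarrow> nat \<Rightarrow> nat \<Rightarrow> real" where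
  "ee E x y = (if E x y then 1 else 0)"

fun ppow :: "nat set \<Rightarrow> (nat \<Rightarrow> nat \<Rightarrow> bool) \<Rightarrow> real \<Rightarrow> nat \<Rightarrow> nat \<Rightarrow> nat \<Rightarrow> real" where
  "ppow V E a 0 x y = (if x = y then 1 else 0)"
| "ppow V E a (Suc n) x y = (\<Sum>z\<in>V. ((if x = z then 1 else 0) + generator V E x z / a) * ppow V E a n z y)"

locale gr =
  fixes V :: "nat set" and E :: "nat \<Rightarrow> nat \<Rightarrow> bool" and d :: real
  assumes fin: "finite V" and ne: "V \<noteq> {}" and sym: "E x y \<Longrightarrow> E y x" and irr: "\<not> E x x"
    and inV: "E x y \<Longrightarrow> x \<in> V \<and> y \<in> V"
    and degb: "x \<in> V \<Longrightarrow> real (degree V E x) \<le> d" and dpos: "d > 0"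
begin

abbreviation "e \<equiv> ee E"
abbreviation "Q \<equiv> generator V E"
abbreviation "a \<equiv> 2 * d"
definition "Pm x z = (if x = z then 1 else 0) + Q x z / a"
abbreviation "pp \<equiv> ppow V E (2 * d)"

lemma e_sym: "e x y = e y x" using sym unfolding ee_def by metis

lemma deg_sum: "real (degree V E x) = (\<Sum>y\<in>V. e x y)"
proof -
  have c: "card {y\<in>V. E x y} = card (V \<inter> Collect (E x))" by (rule arg_cong[where f=card]) auto
  show ?thesis unfolding degree_def ee_def using fin c by (simp add: sum.If_cases)
qed

lemma Q_sym: "Q x y = Q y x"
  unfolding generator_def using sym by auto

lemma Q_row: "x \<in> V \<Longrightarrow> (\<Sum>z\<in>V. Q x z * f z) = (\<Sum>z\<in>V. e x z * (f z - f x))"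
proof -
  assume x: "x \<in> V"
  have "(\<Sum>z\<in>V. Q x z * f z) = (\<Sum>z\<in>V. e x z * f z) - (\<Sum>z\<in>V. (if x = z then real (degree V E x) else 0) * f z)"
    unfolding generator_def ee_def by (simp add: algebra_simps sum_subtractf)
  also have "(\<Sum>z\<in>V. (if x = z then real (degree V E x) else 0) * f z) = (\<Sum>z\<in>V. if x = z then real (degree V E x) * f z else 0)"
    by (rule sum.cong) auto
  also have "\<dots> = real (degree V E x) * f x"
    using x fin by (simp add: sum.delta)
  also have "\<dots> = (\<Sum>z\<in>V. e x z * f x)" by (simp add: deg_sum sum_distrib_right)
  finally show ?thesis by (simp add: algebra_simps sum_subtractf)
qed

lemma Q_outside: "x \<notin> V \<Longrightarrow> z \<in> V \<Longrightarrow> Q x z = 0"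
  unfolding generator_def using inV by auto

lemma Q_abs_row: "(\<Sum>z\<in>V. \<bar>Q x z\<bar>) \<le> 2 * d"
proof (cases "x \<in> V")
  case True
  have "(\<Sum>z\<in>V. \<bar>Q x z\<bar>) = (\<Sum>z\<in>V. e x z + (if x = z then real (degree V E x) else 0))"
    by (rule sum.cong) (auto simp: generator_def ee_def irr)
  also have "\<dots> = 2 * real (degree V E x)" using True fin by (simp add: sum.distrib deg_sum)
  finally show ?thesis using degb[OF True] by simp
next
  case False then show ?thesis using Q_outside dpos by simp
qed

lemma e_nonneg: "e x y \<ge> 0" by (simp add: ee_def)

lemma Pm_nonneg: "Pm x z \<ge> 0"
proof (cases "x = z")
  case True
  then have "Q x z = - real (degree V E x)" unfolding generator_def using irr by simp
  moreover have "real (degree V E x) \<le> d"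
  proof (cases "x \<in> V")
    case True then show ?thesis by (rule degb)
  next
    case False then have "{y \<in> V. E x y} = {}" using inV by auto
    then show ?thesis using dpos by (simp add: degree_def del: Collect_empty_eq)
  qed
  ultimately show ?thesis using True dpos unfolding Pm_def by (simp add: field_simps)
next
  case False then show ?thesis unfolding Pm_def generator_def using dpos by simp
qed

lemma Pm_sym: "Pm x y = Pm y x" unfolding Pm_def using Q_sym by auto

lemma Pm_row: "x \<in> V \<Longrightarrow> (\<Sum>z\<in>V. Pm x z * f z) = f x + (\<Sum>z\<in>V. e x z * (f z - f x)) / a"
proof -
  assume x: "x \<in> V"
  have "(\<Sum>z\<in>V. Pm x z * f z) = (\<Sum>z\<in>V. (if x = z then 1 else 0) * f z) + (\<Sum>z\<in>V. Q x z * f z) / a"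
    unfolding Pm_def by (simp add: algebra_simps sum.distrib sum_divide_distrib)
  also have "(\<Sum>z\<in>V. (if x = z then 1 else 0) * f z) = (\<Sum>z\<in>V. if x = z then f z else 0)"
    by (rule sum.cong) auto
  also have "\<dots> = f x" using x fin by (simp add: sum.delta)
  finally show ?thesis using Q_row[OF x] by simp
qed

lemma Pm_row1: "x \<in> V \<Longrightarrow> (\<Sum>z\<in>V. Pm x z) = 1"
  using Pm_row[of x "\<lambda>_. 1"] by simp

lemma Pm_col1: "x \<in> V \<Longrightarrow> (\<Sum>z\<in>V. Pm z x) = 1"
  using Pm_row1[of x] by (simp add: Pm_sym)

lemma pp_Suc: "pp (Suc n) x y = (\<Sum>z\<in>V. Pm x z * pp n z y)"
  by (simp add: Pm_def)

lemma pp_nonneg: "pp n x y \<ge> 0"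
  by (induction n arbitrary: x) (auto simp: pp_Suc Pm_nonneg intro!: sum_nonneg simp del: ppow.simps(2))

lemma pp_colsum: "y \<in> V \<Longrightarrow> (\<Sum>w\<in>V. pp n w y) = 1"
proof (induction n)
  case 0 then show ?case using fin by simp
next
  case (Suc n)
  have "(\<Sum>w\<in>V. pp (Suc n) w y) = (\<Sum>w\<in>V. \<Sum>z\<in>V. Pm w z * pp n z y)" by (simp only: pp_Suc)
  also have "\<dots> = (\<Sum>z\<in>V. (\<Sum>w\<in>V. Pm w z) * pp n z y)"
    by (subst sum.swap) (simp add: sum_distrib_right)
  also have "\<dots> = (\<Sum>z\<in>V. pp n z y)" by (intro sum.cong) (auto simp: Pm_col1)
  finally show ?case using Suc by simp
qed


definition "Dir f = (\<Sum>w\<in>V. \<Sum>z\<in>V. e w z * (f w - f z)\<^sup>2)"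

lemma Dir_nonneg: "Dir f \<ge> 0"
  unfolding Dir_def by (intro sum_nonneg mult_nonneg_nonneg e_nonneg) auto

lemma e_sq: "e x y * e x y = e x y" by (simp add: ee_def)

lemma L1: "(\<Sum>w\<in>V. f w * (\<Sum>z\<in>V. e w z * (f z - f w))) = - Dir f / 2"
proof -
  define S where "S = (\<Sum>w\<in>V. \<Sum>z\<in>V. e w z * (f w * (f z - f w)))"
  have S1: "(\<Sum>w\<in>V. f w * (\<Sum>z\<in>V. e w z * (f z - f w))) = S"
    unfolding S_def by (simp add: sum_distrib_left algebra_simps)
  have "S = (\<Sum>z\<in>V. \<Sum>w\<in>V. e w z * (f w * (f z - f w)))" unfolding S_def by (rule sum.swap)
  also have "\<dots> = (\<Sum>w\<in>V. \<Sum>z\<in>V. e w z * (f z * (f w - f z)))" using e_sym by simp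
  finally have S2: "S = \<dots>" .
  have "S + S = (\<Sum>w\<in>V. \<Sum>z\<in>V. e w z * (f w * (f z - f w)) + e w z * (f z * (f w - f z)))"
    by (subst (2) S2) (simp add: S_def sum.distrib)
  also have "\<dots> = - Dir f" unfolding Dir_def
    by (simp add: sum_negf[symmetric] power2_eq_square algebra_simps)
  finally show ?thesis using S1 by simp
qed

lemma L2: "(\<Sum>w\<in>V. (\<Sum>z\<in>V. e w z * (f z - f w))\<^sup>2) \<le> d * Dir f"
proof -
  have "(\<Sum>z\<in>V. e w z * (f z - f w))\<^sup>2 \<le> d * (\<Sum>z\<in>V. e w z * (f w - f z)\<^sup>2)" if w: "w \<in> V" for w
  proof -
    have "(\<Sum>z\<in>V. e w z * (f z - f w))\<^sup>2 = (\<Sum>z\<in>V. e w z * (e w z * (f z - f w)))\<^sup>2"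
      by (simp add: e_sq mult.assoc[symmetric])
    also have "\<dots> \<le> (\<Sum>z\<in>V. (e w z)\<^sup>2) * (\<Sum>z\<in>V. (e w z * (f z - f w))\<^sup>2)"
      by (rule Cauchy_Schwarz_ineq_sum)
    also have "(\<Sum>z\<in>V. (e w z)\<^sup>2) = real (degree V E w)" by (simp add: power2_eq_square e_sq deg_sum)
    also have "(\<Sum>z\<in>V. (e w z * (f z - f w))\<^sup>2) = (\<Sum>z\<in>V. e w z * (f w - f z)\<^sup>2)"
      by (intro sum.cong refl) (simp add: power2_eq_square ee_def algebra_simps)
    also have "real (degree V E w) * \<dots> \<le> d * \<dots>"
      using degb[OF w] by (intro mult_right_mono sum_nonneg mult_nonneg_nonneg e_nonneg) auto
    finally show ?thesis .
  qed
  then have "(\<Sum>w\<in>V. (\<Sum>z\<in>V. e w z * (f z - f w))\<^sup>2) \<le> (\<Sum>w\<in>V. d * (\<Sum>z\<in>V. e w z * (f w - f z)\<^sup>2))"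
    by (rule sum_mono)
  then show ?thesis by (simp add: Dir_def sum_distrib_left)
qed

lemma L3: "(\<Sum>w\<in>V. (\<Sum>z\<in>V. Pm w z * f z)\<^sup>2) \<le> (\<Sum>w\<in>V. (f w)\<^sup>2) - Dir f / (4 * d)"
proof -
  define g where "g w = (\<Sum>z\<in>V. e w z * (f z - f w))" for w
  have "(\<Sum>w\<in>V. (\<Sum>z\<in>V. Pm w z * f z)\<^sup>2) = (\<Sum>w\<in>V. (f w + g w / a)\<^sup>2)"
    by (intro sum.cong refl) (simp add: Pm_row g_def)
  also have "\<dots> = (\<Sum>w\<in>V. (f w)\<^sup>2) + (2 / a) * (\<Sum>w\<in>V. f w * g w) + (1 / a\<^sup>2) * (\<Sum>w\<in>V. (g w)\<^sup>2)"
  proof -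
    have "(f w + g w / a)\<^sup>2 = (f w)\<^sup>2 + (2 / a) * (f w * g w) + (1 / a\<^sup>2) * (g w)\<^sup>2" for w
      using dpos by (simp add: power2_eq_square field_simps)
    then show ?thesis by (simp add: sum.distrib sum_distrib_left)
  qed
  also have "(\<Sum>w\<in>V. f w * g w) = - Dir f / 2" unfolding g_def by (rule L1)
  also have "(1 / a\<^sup>2) * (\<Sum>w\<in>V. (g w)\<^sup>2) \<le> (1 / a\<^sup>2) * (d * Dir f)"
    unfolding g_def by (intro mult_left_mono L2) auto
  finally have "(\<Sum>w\<in>V. (\<Sum>z\<in>V. Pm w z * f z)\<^sup>2) \<le> (\<Sum>w\<in>V. (f w)\<^sup>2) + 2 / a * (- Dir f / 2) + 1 / a\<^sup>2 * (d * Dir f)"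
    by simp
  also have "\<dots> = (\<Sum>w\<in>V. (f w)\<^sup>2) - Dir f / (4 * d)"
    using dpos by (simp add: field_simps power2_eq_square)
  finally show ?thesis .
qed

end

locale grk = gr +
  fixes \<kappa> :: real
  assumes kpos: "\<kappa> > 0"
    and expn: "S \<subseteq> V \<Longrightarrow> 0 < card S \<Longrightarrow> real (card S) \<le> real (card V) / 2 \<Longrightarrow> \<kappa> * real (card S) \<le> real (card (vboundary V E S))"
begin

lemma cut: "S \<subseteq> V \<Longrightarrow> real (card (vboundary V E S)) \<le>
   (\<Sum>w\<in>V. \<Sum>z\<in>V. e w z * \<bar>(if w \<in> S then 1 else 0) - (if z \<in> S then 1 else 0)\<bar>)"
proof -
  assume SV: "S \<subseteq> V"
  let ?F = "\<lambda>w. \<Sum>z\<in>V. e w z * \<bar>(if w \<in> S then 1 else 0) - (if z \<in> S then 1 else 0 :: real)\<bar>"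
  have vb: "vboundary V E S \<subseteq> V" unfolding vboundary_def by auto
  have "real (card (vboundary V E S)) = (\<Sum>w\<in>vboundary V E S. 1)" by simp
  also have "\<dots> \<le> (\<Sum>w\<in>vboundary V E S. ?F w)"
  proof (rule sum_mono)
    fix w assume w: "w \<in> vboundary V E S"
    then obtain u where u: "u \<in> S" "E u w" "w \<notin> S" unfolding vboundary_def by auto
    have "1 = e w u * \<bar>(if w \<in> S then 1 else 0) - (if u \<in> S then 1 else 0 :: real)\<bar>"
      using u sym unfolding ee_def by auto
    also have "\<dots> \<le> ?F w" using u SV fin
      by (intro member_le_sum[where f="\<lambda>z. e w z * \<bar>(if w \<in> S then 1 else 0) - (if z \<in> S then 1 else 0 :: real)\<bar>"])
         (auto intro!: mult_nonneg_nonneg e_nonneg)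
    finally show "1 \<le> ?F w" .
  qed
  also have "\<dots> \<le> (\<Sum>w\<in>V. ?F w)"
    using vb fin by (intro sum_mono2) (auto intro!: sum_nonneg mult_nonneg_nonneg e_nonneg)
  finally show ?thesis .
qed


lemma coarea: "(\<forall>w\<in>V. g w \<ge> 0) \<Longrightarrow> real (card {w\<in>V. g w > 0}) \<le> real (card V) / 2 \<Longrightarrow>
   \<kappa> * (\<Sum>w\<in>V. g w) \<le> (\<Sum>w\<in>V. \<Sum>z\<in>V. e w z * \<bar>g w - g z\<bar>)"
proof (induction "card {w\<in>V. g w > 0}" arbitrary: g rule: less_induct)
  case less
  define S where "S = {w\<in>V. g w > 0}"
  have finS: "finite S" "S \<subseteq> V" using fin unfolding S_def by auto
  have RHSnn: "0 \<le> (\<Sum>w\<in>V. \<Sum>z\<in>V. e w z * \<bar>g' w - g' z\<bar>)" for g'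
    by (intro sum_nonneg mult_nonneg_nonneg e_nonneg) auto
  show ?case
  proof (cases "S = {}")
    case True
    then have "\<forall>w\<in>V. g w = 0" using less.prems unfolding S_def by force
    then show ?thesis using RHSnn[of g] by simp
  next
    case False
    define c where "c = Min (g ` S)"
    have cS: "c \<in> g ` S" unfolding c_def using finS False by (intro Min_in) auto
    then obtain w0 where w0: "w0 \<in> S" "g w0 = c" by auto
    have cpos: "c > 0" using w0 unfolding S_def by auto
    have cle: "\<And>w. w \<in> S \<Longrightarrow> c \<le> g w" unfolding c_def using finS by auto
    define g' where "g' w = (if w \<in> S then g w - c else 0)" for w
    have g'nn: "\<forall>w\<in>V. g' w \<ge> 0" using cle unfolding g'_def by auto
    have sub: "{w\<in>V. g' w > 0} \<subseteq> S - {w0}" unfolding g'_def using w0 by (auto split: if_splits)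
    have cardlt: "card {w\<in>V. g' w > 0} < card {w\<in>V. g w > 0}"
    proof -
      have "card {w\<in>V. g' w > 0} \<le> card (S - {w0})" using sub finS by (intro card_mono) auto
      also have "\<dots> < card S" using w0 finS by (metis card_Diff1_less)
      finally show ?thesis unfolding S_def .
    qed
    have cardle: "real (card {w\<in>V. g' w > 0}) \<le> real (card V) / 2"
    proof -
      have "card {w\<in>V. g' w > 0} \<le> card S" using sub finS by (intro card_mono) auto
      then show ?thesis using less.prems unfolding S_def by linarith
    qed
    have IH: "\<kappa> * (\<Sum>w\<in>V. g' w) \<le> (\<Sum>w\<in>V. \<Sum>z\<in>V. e w z * \<bar>g' w - g' z\<bar>)"
      using less.hyps[OF cardlt g'nn cardle] .
    have cardSpos: "0 < card S" using False finS by auto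
    have ex: "\<kappa> * real (card S) \<le> (\<Sum>w\<in>V. \<Sum>z\<in>V. e w z * \<bar>(if w \<in> S then 1 else 0) - (if z \<in> S then 1 else 0)\<bar>)"
      using expn[OF finS(2) cardSpos] less.prems(2) cut[OF finS(2)] unfolding S_def by linarith
    have pw: "\<bar>g w - g z\<bar> = c * \<bar>(if w \<in> S then 1 else 0) - (if z \<in> S then 1 else 0)\<bar> + \<bar>g' w - g' z\<bar>"
      if "w \<in> V" "z \<in> V" for w z
      using that cle[of w] cle[of z] cpos less.prems(1) unfolding g'_def S_def by (auto simp: abs_if)
    have "(\<Sum>w\<in>V. \<Sum>z\<in>V. e w z * \<bar>g w - g z\<bar>) =
       c * (\<Sum>w\<in>V. \<Sum>z\<in>V. e w z * \<bar>(if w \<in> S then 1 else 0) - (if z \<in> S then 1 else 0)\<bar>)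
       + (\<Sum>w\<in>V. \<Sum>z\<in>V. e w z * \<bar>g' w - g' z\<bar>)"
      by (simp add: pw sum.distrib sum_distrib_left algebra_simps cong: sum.cong)
    moreover have "(\<Sum>w\<in>V. g w) = c * real (card S) + (\<Sum>w\<in>V. g' w)"
    proof -
      have "(\<Sum>w\<in>V. g w) = (\<Sum>w\<in>V. (if w \<in> S then c else 0) + g' w)"
        using less.prems(1) unfolding g'_def S_def by (intro sum.cong) auto
      also have "\<dots> = (\<Sum>w\<in>V. if w \<in> S then c else 0) + (\<Sum>w\<in>V. g' w)" by (simp add: sum.distrib)
      also have "(\<Sum>w\<in>V. if w \<in> S then c else 0) = c * real (card S)"
        using fin finS by (simp add: sum.If_cases Int_absorb1)
      finally show ?thesis .
    qed
    ultimately show ?thesis using IH ex cpos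
      by (smt (verit, ccfv_SIG) mult_left_mono distrib_left mult.assoc mult.commute)
  qed
qed


lemma double_swap: "(\<Sum>w\<in>V. \<Sum>z\<in>V. e w z * F z) = (\<Sum>w\<in>V. \<Sum>z\<in>V. e w z * F w)"
  by (subst sum.swap) (simp add: e_sym)

lemma double_deg: "(\<Sum>w\<in>V. \<Sum>z\<in>V. e w z * F w) = (\<Sum>w\<in>V. real (degree V E w) * F w)"
  by (simp add: deg_sum sum_distrib_right)

lemma cheeger: "(\<forall>w\<in>V. h w \<ge> 0) \<Longrightarrow> real (card {w\<in>V. h w > 0}) \<le> real (card V) / 2 \<Longrightarrow>
   \<kappa>\<^sup>2 * (\<Sum>w\<in>V. (h w)\<^sup>2) \<le> 4 * d * Dir h"
proof -
  assume hnn: "\<forall>w\<in>V. h w \<ge> 0" and card: "real (card {w\<in>V. h w > 0}) \<le> real (card V) / 2"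
  define X where "X = (\<Sum>w\<in>V. (h w)\<^sup>2)"
  have Xnn: "X \<ge> 0" unfolding X_def by (simp add: sum_nonneg)
  have supp: "{w\<in>V. (h w)\<^sup>2 > 0} = {w\<in>V. h w > 0}" using hnn by force
  have co: "\<kappa> * X \<le> (\<Sum>w\<in>V. \<Sum>z\<in>V. e w z * \<bar>(h w)\<^sup>2 - (h z)\<^sup>2\<bar>)"
    unfolding X_def using coarea[of "\<lambda>w. (h w)\<^sup>2"] card supp by simp
  define A where "A p = e (fst p) (snd p) * \<bar>h (fst p) - h (snd p)\<bar>" for p
  define B where "B p = e (fst p) (snd p) * (h (fst p) + h (snd p))" for p
  have "(\<Sum>w\<in>V. \<Sum>z\<in>V. e w z * \<bar>(h w)\<^sup>2 - (h z)\<^sup>2\<bar>) = (\<Sum>w\<in>V. \<Sum>z\<in>V. A (w, z) * B (w, z))"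
  proof (intro sum.cong refl)
    fix w z assume "w \<in> V" "z \<in> V"
    then have "h w \<ge> 0" "h z \<ge> 0" using hnn by auto
    moreover have "(h w)\<^sup>2 - (h z)\<^sup>2 = (h w - h z) * (h w + h z)" by (simp add: power2_eq_square algebra_simps)
    ultimately have "\<bar>(h w)\<^sup>2 - (h z)\<^sup>2\<bar> = \<bar>h w - h z\<bar> * (h w + h z)"
      by (simp add: abs_mult)
    then show "e w z * \<bar>(h w)\<^sup>2 - (h z)\<^sup>2\<bar> = A (w, z) * B (w, z)"
      unfolding A_def B_def by (simp add: ee_def)
  qed
  also have "\<dots> = (\<Sum>p\<in>V \<times> V. A p * B p)" by (simp add: sum.cartesian_product)
  finally have co2: "\<kappa> * X \<le> (\<Sum>p\<in>V \<times> V. A p * B p)" using co by simp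
  have CS: "(\<Sum>p\<in>V \<times> V. A p * B p)\<^sup>2 \<le> (\<Sum>p\<in>V \<times> V. (A p)\<^sup>2) * (\<Sum>p\<in>V \<times> V. (B p)\<^sup>2)"
    by (rule Cauchy_Schwarz_ineq_sum)
  have SA: "(\<Sum>p\<in>V \<times> V. (A p)\<^sup>2) = Dir h"
    unfolding Dir_def A_def sum.cartesian_product
    by (intro sum.cong refl) (auto simp: ee_def power2_eq_square)
  have "(\<Sum>p\<in>V \<times> V. (B p)\<^sup>2) = (\<Sum>w\<in>V. \<Sum>z\<in>V. e w z * (h w + h z)\<^sup>2)"
    unfolding B_def sum.cartesian_product
    by (intro sum.cong refl) (auto simp: ee_def power2_eq_square)
  also have "\<dots> \<le> (\<Sum>w\<in>V. \<Sum>z\<in>V. e w z * (2 * (h w)\<^sup>2) + e w z * (2 * (h z)\<^sup>2))"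
  proof (intro sum_mono)
    fix w z
    have "(h w + h z)\<^sup>2 \<le> 2 * (h w)\<^sup>2 + 2 * (h z)\<^sup>2"
    proof -
      have "0 \<le> (h w - h z) * (h w - h z)" by simp
      then show ?thesis by (simp add: power2_eq_square algebra_simps)
    qed
    then show "e w z * (h w + h z)\<^sup>2 \<le> e w z * (2 * (h w)\<^sup>2) + e w z * (2 * (h z)\<^sup>2)"
      using e_nonneg[of w z] by (metis distrib_left mult_left_mono)
  qed
  also have "\<dots> = 2 * (\<Sum>w\<in>V. \<Sum>z\<in>V. e w z * (h w)\<^sup>2) + 2 * (\<Sum>w\<in>V. \<Sum>z\<in>V. e w z * (h z)\<^sup>2)"
  proof -
    have "(\<Sum>w\<in>V. \<Sum>z\<in>V. e w z * (2 * (h w)\<^sup>2) + e w z * (2 * (h z)\<^sup>2)) =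
      (\<Sum>w\<in>V. \<Sum>z\<in>V. 2 * (e w z * (h w)\<^sup>2)) + (\<Sum>w\<in>V. \<Sum>z\<in>V. 2 * (e w z * (h z)\<^sup>2))"
    proof -
      have pt: "e w z * (2 * (h w)\<^sup>2) + e w z * (2 * (h z)\<^sup>2) = 2 * (e w z * (h w)\<^sup>2) + 2 * (e w z * (h z)\<^sup>2)" for w z
        by simp
      show ?thesis unfolding pt sum.distrib ..
    qed
    then show ?thesis unfolding sum_distrib_left[symmetric] .
  qed
  also have "\<dots> = 4 * (\<Sum>w\<in>V. real (degree V E w) * (h w)\<^sup>2)"
    using double_swap[of "\<lambda>z. (h z)\<^sup>2"] double_deg[of "\<lambda>z. (h z)\<^sup>2"] by simp
  also have "\<dots> \<le> 4 * (\<Sum>w\<in>V. d * (h w)\<^sup>2)"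
    using degb by (intro mult_left_mono sum_mono mult_right_mono) auto
  also have "\<dots> = 4 * d * X" unfolding X_def by (simp add: sum_distrib_left mult.assoc)
  finally have SB: "(\<Sum>p\<in>V \<times> V. (B p)\<^sup>2) \<le> 4 * d * X" .
  have kX: "0 \<le> \<kappa> * X" using kpos Xnn by simp
  have "(\<kappa> * X)\<^sup>2 \<le> (\<Sum>p\<in>V \<times> V. A p * B p)\<^sup>2" using co2 kX by (intro power_mono) auto
  also have "\<dots> \<le> Dir h * (4 * d * X)"
    using order_trans[OF CS[unfolded SA] mult_left_mono[OF SB Dir_nonneg]] .
  finally have main: "\<kappa>\<^sup>2 * X * X \<le> 4 * d * Dir h * X" by (simp add: power2_eq_square algebra_simps)
  show ?thesis
  proof (cases "X = 0")
    case True then show ?thesis using Dir_nonneg[of h] dpos unfolding X_def by simp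
  next
    case False then have "X > 0" using Xnn by simp
    then have "\<kappa>\<^sup>2 * X \<le> 4 * d * Dir h" by (rule mult_right_le_imp_le[OF main])
    then show ?thesis unfolding X_def .
  qed
qed


lemma sq_split: "((u::real) - v)\<^sup>2 \<ge> (max u 0 - max v 0)\<^sup>2 + (max (-u) 0 - max (-v) 0)\<^sup>2"
proof (cases "u \<ge> 0"; cases "v \<ge> 0")
  assume "u \<ge> 0" "\<not> v \<ge> 0"
  then have "u * v \<le> 0" by (simp add: mult_nonneg_nonpos)
  then show ?thesis using \<open>u \<ge> 0\<close> \<open>\<not> v \<ge> 0\<close> by (simp add: power2_eq_square max_def algebra_simps)
next
  assume "\<not> u \<ge> 0" "v \<ge> 0"
  then have "u * v \<le> 0" by (simp add: mult_nonpos_nonneg)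
  then show ?thesis using \<open>\<not> u \<ge> 0\<close> \<open>v \<ge> 0\<close> by (simp add: power2_eq_square max_def algebra_simps)
qed (auto simp: power2_eq_square max_def algebra_simps)

lemma card_split: "card {w\<in>V. P w} + card {w\<in>V. \<not> P w} = card V"
proof -
  have "{w\<in>V. P w} \<union> {w\<in>V. \<not> P w} = V" "{w\<in>V. P w} \<inter> {w\<in>V. \<not> P w} = {}" by auto
  then show ?thesis using fin card_Un_disjoint[of "{w\<in>V. P w}" "{w\<in>V. \<not> P w}"] by simp
qed

lemma poincare: "(\<Sum>w\<in>V. f w) = 0 \<Longrightarrow> \<kappa>\<^sup>2 * (\<Sum>w\<in>V. (f w)\<^sup>2) \<le> 4 * d * Dir f"
proof -
  assume f0: "(\<Sum>w\<in>V. f w) = 0"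
  define n where "n = real (card V)"
  define M where "M = {v \<in> f ` V. real (card {w\<in>V. f w \<le> v}) \<ge> n / 2}"
  have finM: "finite M" unfolding M_def using fin by auto
  have "Max (f ` V) \<in> M"
  proof -
    have "{w\<in>V. f w \<le> Max (f ` V)} = V" using fin by auto
    then show ?thesis unfolding M_def n_def using fin ne by auto
  qed
  then have Mne: "M \<noteq> {}" by auto
  define m where "m = Min M"
  have mM: "m \<in> M" unfolding m_def using finM Mne by (rule Min_in)
  have gt: "real (card {w\<in>V. f w > m}) \<le> real (card V) / 2"
  proof -
    have "card {w\<in>V. f w \<le> m} + card {w\<in>V. \<not> f w \<le> m} = card V" by (rule card_split)
    moreover have "{w\<in>V. \<not> f w \<le> m} = {w\<in>V. f w > m}" by auto
    ultimately show ?thesis using mM unfolding M_def n_def by auto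
  qed
  have lt: "real (card {w\<in>V. f w < m}) \<le> real (card V) / 2"
  proof (rule ccontr)
    assume A: "\<not> ?thesis"
    define L where "L = {w\<in>V. f w < m}"
    have finL: "finite L" unfolding L_def using fin by auto
    have Lne: "L \<noteq> {}"
    proof
      assume "L = {}"
      then show False using A unfolding L_def[symmetric] by simp
    qed
    define m' where "m' = Max (f ` L)"
    have m'in: "m' \<in> f ` L" unfolding m'_def using finL Lne by (intro Max_in) auto
    then have m'lt: "m' < m" and m'V: "m' \<in> f ` V" unfolding L_def by auto
    have "L \<subseteq> {w\<in>V. f w \<le> m'}" unfolding m'_def using finL by (auto simp: L_def)
    then have "card L \<le> card {w\<in>V. f w \<le> m'}" using fin by (intro card_mono) auto
    then have "m' \<in> M" using A m'V unfolding M_def L_def n_def by auto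
    then have "m \<le> m'" unfolding m_def using finM by auto
    then show False using m'lt by simp
  qed
  define gp where "gp w = max (f w - m) 0" for w
  define gm where "gm w = max (m - f w) 0" for w
  have sp: "{w\<in>V. gp w > 0} = {w\<in>V. f w > m}" unfolding gp_def by auto
  have sm: "{w\<in>V. gm w > 0} = {w\<in>V. f w < m}" unfolding gm_def by auto
  have cp: "\<kappa>\<^sup>2 * (\<Sum>w\<in>V. (gp w)\<^sup>2) \<le> 4 * d * Dir gp"
    using cheeger[of gp] gt unfolding sp by (auto simp: gp_def)
  have cm: "\<kappa>\<^sup>2 * (\<Sum>w\<in>V. (gm w)\<^sup>2) \<le> 4 * d * Dir gm"
    using cheeger[of gm] lt unfolding sm by (auto simp: gm_def)
  have DD: "Dir gp + Dir gm \<le> Dir f"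
  proof -
    have "Dir gp + Dir gm = (\<Sum>w\<in>V. \<Sum>z\<in>V. e w z * (gp w - gp z)\<^sup>2 + e w z * (gm w - gm z)\<^sup>2)"
      unfolding Dir_def by (simp add: sum.distrib)
    also have "\<dots> \<le> Dir f" unfolding Dir_def
    proof (intro sum_mono)
      fix w z
      have "(gp w - gp z)\<^sup>2 + (gm w - gm z)\<^sup>2 \<le> (f w - f z)\<^sup>2"
        using sq_split[of "f w - m" "f z - m"] unfolding gp_def gm_def by simp
      then show "e w z * (gp w - gp z)\<^sup>2 + e w z * (gm w - gm z)\<^sup>2 \<le> e w z * (f w - f z)\<^sup>2"
        using e_nonneg[of w z] by (metis distrib_left mult_left_mono)
    qed
    finally show ?thesis .
  qed
  have SS: "(\<Sum>w\<in>V. (f w)\<^sup>2) \<le> (\<Sum>w\<in>V. (gp w)\<^sup>2) + (\<Sum>w\<in>V. (gm w)\<^sup>2)"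
  proof -
    have "(\<Sum>w\<in>V. (gp w)\<^sup>2) + (\<Sum>w\<in>V. (gm w)\<^sup>2) = (\<Sum>w\<in>V. (f w)\<^sup>2 - 2 * m * f w + m\<^sup>2)"
      unfolding sum.distrib[symmetric]
      by (intro sum.cong refl) (auto simp: gp_def gm_def max_def power2_eq_square algebra_simps)
    also have "\<dots> = (\<Sum>w\<in>V. (f w)\<^sup>2) - 2 * m * (\<Sum>w\<in>V. f w) + n * m\<^sup>2"
      by (simp add: sum.distrib sum_subtractf sum_distrib_left n_def)
    finally show ?thesis using f0 unfolding n_def by simp
  qed
  have "\<kappa>\<^sup>2 * (\<Sum>w\<in>V. (f w)\<^sup>2) \<le> \<kappa>\<^sup>2 * ((\<Sum>w\<in>V. (gp w)\<^sup>2) + (\<Sum>w\<in>V. (gm w)\<^sup>2))"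
    using SS by (intro mult_left_mono) auto
  also have "\<dots> \<le> 4 * d * Dir gp + 4 * d * Dir gm" using cp cm by (simp add: distrib_left)
  also have "\<dots> \<le> 4 * d * Dir f" using DD dpos by (simp add: distrib_left[symmetric])
  finally show ?thesis .
qed


definition "rho = max 0 (1 - \<kappa>\<^sup>2 / (16 * d\<^sup>2))"

lemma rho_nonneg: "rho \<ge> 0" unfolding rho_def by simp
lemma rho_lt1: "rho < 1" unfolding rho_def using kpos dpos by simp

lemma contract: "(\<Sum>w\<in>V. f w) = 0 \<Longrightarrow> (\<Sum>w\<in>V. (\<Sum>z\<in>V. Pm w z * f z)\<^sup>2) \<le> rho * (\<Sum>w\<in>V. (f w)\<^sup>2)"
proof -
  assume f0: "(\<Sum>w\<in>V. f w) = 0"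
  define X where "X = (\<Sum>w\<in>V. (f w)\<^sup>2)"
  have Xnn: "X \<ge> 0" unfolding X_def by (simp add: sum_nonneg)
  have P: "\<kappa>\<^sup>2 * X \<le> 4 * d * Dir f" unfolding X_def by (rule poincare[OF f0])
  have "(\<Sum>w\<in>V. (\<Sum>z\<in>V. Pm w z * f z)\<^sup>2) \<le> X - Dir f / (4 * d)" unfolding X_def by (rule L3)
  also have "\<dots> \<le> X - \<kappa>\<^sup>2 * X / (16 * d\<^sup>2)"
  proof -
    have "\<kappa>\<^sup>2 * X / (16 * d\<^sup>2) = (\<kappa>\<^sup>2 * X / (4 * d)) / (4 * d)" using dpos by (simp add: power2_eq_square field_simps)
    also have "\<dots> \<le> Dir f / (4 * d)" using P dpos by (intro divide_right_mono) (auto simp: field_simps)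
    finally show ?thesis by simp
  qed
  also have "\<dots> = (1 - \<kappa>\<^sup>2 / (16 * d\<^sup>2)) * X" by (simp add: algebra_simps)
  also have "\<dots> \<le> rho * X" unfolding rho_def using Xnn by (intro mult_right_mono) auto
  finally show ?thesis unfolding X_def .
qed

lemma decay: assumes y: "y \<in> V" shows "pp j y y \<le> 1 / real (card V) + sqrt rho ^ j"
proof -
  define n where "n = real (card V)"
  have npos: "n > 0" unfolding n_def using fin ne by (simp add: card_gt_0_iff)
  define F where "F j w = pp j w y - 1 / n" for j w
  have F0: "(\<Sum>w\<in>V. F j w) = 0" for j
    unfolding F_def using pp_colsum[OF y, of j] npos by (simp add: sum_subtractf n_def)
  have FS: "F (Suc j) w = (\<Sum>z\<in>V. Pm w z * F j z)" if w: "w \<in> V" for j w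
  proof -
    have "(\<Sum>z\<in>V. Pm w z * F j z) = (\<Sum>z\<in>V. Pm w z * pp j z y) - (\<Sum>z\<in>V. Pm w z) / n"
      unfolding F_def by (simp add: algebra_simps sum_subtractf sum_divide_distrib)
    then show ?thesis using Pm_row1[OF w] unfolding F_def pp_Suc by simp
  qed
  have Fb: "(\<Sum>w\<in>V. (F j w)\<^sup>2) \<le> rho ^ j" for j
  proof (induction j)
    case 0
    have "(\<Sum>w\<in>V. (F 0 w)\<^sup>2) = (\<Sum>w\<in>V. (if w = y then 1 - 2 / n else 0) + 1 / n\<^sup>2)"
      unfolding F_def using npos by (intro sum.cong refl) (simp add: power2_eq_square field_simps)
    also have "\<dots> = 1 - 2 / n + n * (1 / n\<^sup>2)" using fin y by (simp add: sum.distrib n_def)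
    also have "\<dots> \<le> 1" using npos by (simp add: power2_eq_square field_simps)
    finally show ?case by simp
  next
    case (Suc j)
    have "(\<Sum>w\<in>V. (F (Suc j) w)\<^sup>2) = (\<Sum>w\<in>V. (\<Sum>z\<in>V. Pm w z * F j z)\<^sup>2)"
      by (intro sum.cong refl) (simp add: FS)
    also have "\<dots> \<le> rho * (\<Sum>w\<in>V. (F j w)\<^sup>2)" by (rule contract[OF F0])
    also have "\<dots> \<le> rho * rho ^ j" using Suc rho_nonneg by (intro mult_left_mono) auto
    finally show ?case by simp
  qed
  have "(F j y)\<^sup>2 \<le> (\<Sum>w\<in>V. (F j w)\<^sup>2)"
    using fin y by (intro member_le_sum[where f="\<lambda>w. (F j w)\<^sup>2"]) auto
  then have "(F j y)\<^sup>2 \<le> rho ^ j" using Fb[of j] by simp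
  then have "\<bar>F j y\<bar> \<le> sqrt (rho ^ j)" using real_le_rsqrt by (metis real_sqrt_abs real_sqrt_le_mono)
  then have "F j y \<le> sqrt rho ^ j" by (simp add: real_sqrt_power)
  then show ?thesis unfolding F_def n_def by simp
qed


lemma Pm_row': "x \<in> V \<Longrightarrow> (\<Sum>z\<in>V. Pm x z * f z) = f x + (\<Sum>z\<in>V. Q x z * f z) / a"
proof -
  assume x: "x \<in> V"
  have "(\<Sum>z\<in>V. Pm x z * f z) = (\<Sum>z\<in>V. (if x = z then 1 else 0) * f z) + (\<Sum>z\<in>V. Q x z * f z) / a"
    unfolding Pm_def by (simp add: algebra_simps sum.distrib sum_divide_distrib)
  also have "(\<Sum>z\<in>V. (if x = z then 1 else 0) * f z) = (\<Sum>z\<in>V. if x = z then f z else 0)"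
    by (rule sum.cong) auto
  also have "\<dots> = f x" using x fin by (simp add: sum.delta)
  finally show ?thesis .
qed

lemma QP: "x \<in> V \<Longrightarrow> (\<Sum>z\<in>V. Q x z * pp j z y) = a * (pp (Suc j) x y - pp j x y)"
proof -
  assume x: "x \<in> V"
  have "pp (Suc j) x y = pp j x y + (\<Sum>z\<in>V. Q x z * pp j z y) / a"
    unfolding pp_Suc using Pm_row'[OF x, of "\<lambda>z. pp j z y"] .
  then show ?thesis using dpos by (simp add: field_simps)
qed

lemma gen_bound: "\<bar>gen_pow V E n x y\<bar> \<le> (2 * d) ^ n"
proof (induction n arbitrary: x)
  case 0 then show ?case by simp
next
  case (Suc n)
  have "\<bar>gen_pow V E (Suc n) x y\<bar> \<le> (\<Sum>z\<in>V. \<bar>Q x z\<bar> * \<bar>gen_pow V E n z y\<bar>)"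
    by (simp add: sum_abs[THEN order_trans] abs_mult)
  also have "\<dots> \<le> (\<Sum>z\<in>V. \<bar>Q x z\<bar> * (2 * d) ^ n)"
    using Suc by (intro sum_mono mult_left_mono) auto
  also have "\<dots> = (\<Sum>z\<in>V. \<bar>Q x z\<bar>) * (2 * d) ^ n" by (simp add: sum_distrib_right)
  also have "\<dots> \<le> (2 * d) * (2 * d) ^ n" using Q_abs_row dpos by (intro mult_right_mono) auto
  finally show ?case by simp
qed

lemma pp_le1: "pp n x y \<le> 1"
proof (induction n arbitrary: x)
  case 0 then show ?case by simp
next
  case (Suc n)
  show ?case
  proof (cases "x \<in> V")
    case True
    have "pp (Suc n) x y \<le> (\<Sum>z\<in>V. Pm x z * 1)" unfolding pp_Suc
      using Suc Pm_nonneg by (intro sum_mono mult_left_mono) auto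
    then show ?thesis using Pm_row1[OF True] by simp
  next
    case False
    then have "Pm x z = 0" if "z \<in> V" for z using that Q_outside[OF False that] unfolding Pm_def by auto
    then show ?thesis unfolding pp_Suc by simp
  qed
qed

lemma pascal: "(\<Sum>j\<le>n. real (n choose j) * b ^ (n - j) * K (Suc j)) + (\<Sum>j\<le>n. real (n choose j) * b ^ (Suc n - j) * K j)
   = (\<Sum>j\<le>Suc n. real (Suc n choose j) * b ^ (Suc n - j) * (K j :: real))"
proof -
  have R: "(\<Sum>j\<le>Suc n. real (Suc n choose j) * b ^ (Suc n - j) * K j) =
     b ^ Suc n * K 0 + (\<Sum>i\<le>n. real (n choose i) * b ^ (n - i) * K (Suc i)) + (\<Sum>i\<le>n. real (n choose Suc i) * b ^ (n - i) * K (Suc i))"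
    by (subst sum.atMost_Suc_shift) (simp add: sum.distrib algebra_simps)
  have "(\<Sum>j\<le>n. real (n choose j) * b ^ (Suc n - j) * K j) = (\<Sum>j\<le>Suc n. real (n choose j) * b ^ (Suc n - j) * K j)"
    by simp
  also have "\<dots> = b ^ Suc n * K 0 + (\<Sum>i\<le>n. real (n choose Suc i) * b ^ (n - i) * K (Suc i))"
    by (subst sum.atMost_Suc_shift) simp
  finally show ?thesis using R by simp
qed

lemma binom: "x \<in> V \<Longrightarrow> gen_pow V E n x y = (\<Sum>j\<le>n. real (n choose j) * (- a) ^ (n - j) * (a ^ j * pp j x y))"
proof (induction n arbitrary: x)
  case 0 then show ?case by simp
next
  case (Suc n)
  define K where "K j = a ^ j * pp j x y" for j
  have "gen_pow V E (Suc n) x y = (\<Sum>z\<in>V. Q x z * (\<Sum>j\<le>n. real (n choose j) * (- a) ^ (n - j) * (a ^ j * pp j z y)))"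
    using Suc.IH by simp
  also have "\<dots> = (\<Sum>j\<le>n. real (n choose j) * (- a) ^ (n - j) * a ^ j * (\<Sum>z\<in>V. Q x z * pp j z y))"
    by (simp add: sum_distrib_left sum_distrib_right mult_ac sum.swap[of _ V])
  also have "\<dots> = (\<Sum>j\<le>n. real (n choose j) * (- a) ^ (n - j) * K (Suc j) + real (n choose j) * (- a) ^ (Suc n - j) * K j)"
  proof (intro sum.cong refl)
    fix j assume j: "j \<in> {..n}"
    then have "Suc n - j = Suc (n - j)" by (simp add: Suc_diff_le)
    then show "real (n choose j) * (- a) ^ (n - j) * a ^ j * (\<Sum>z\<in>V. Q x z * pp j z y) =
      real (n choose j) * (- a) ^ (n - j) * K (Suc j) + real (n choose j) * (- a) ^ (Suc n - j) * K j"
      unfolding QP[OF Suc.prems] K_def by (simp add: algebra_simps)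
  qed
  also have "\<dots> = (\<Sum>j\<le>Suc n. real (Suc n choose j) * (- a) ^ (Suc n - j) * K j)"
    unfolding sum.distrib by (rule pascal)
  finally show ?case unfolding K_def .
qed


lemma summable_expb: "summable (\<lambda>n. \<bar>c\<bar> ^ n / fact n :: real)"
  using summable_exp[of "\<bar>c\<bar>"] by (simp add: divide_inverse mult.commute)

lemma sums_expr: "(\<lambda>n. c ^ n / fact n :: real) sums exp c"
  using exp_converges[of c] by (simp add: divide_inverse mult.commute)

lemma heat_eq: assumes x: "x \<in> V"
  shows "heat_kernel V E s x y = exp (- a * s) * (\<Sum>i. (a * s) ^ i / fact i * pp i x y)"
proof -
  define \<alpha> where "\<alpha> i = (a * s) ^ i / fact i * pp i x y" for i
  define \<beta> where "\<beta> i = (- a * s) ^ i / fact i" for i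
  have sa: "summable (\<lambda>i. norm (\<alpha> i))"
  proof (rule summable_comparison_test[OF _ summable_expb[of "a * s"]])
    show "\<exists>N. \<forall>n\<ge>N. norm (norm (\<alpha> n)) \<le> \<bar>a * s\<bar> ^ n / fact n"
    proof (intro exI allI impI)
      fix n :: nat
      have "\<bar>pp n x y\<bar> \<le> 1" using pp_nonneg pp_le1 by (simp add: abs_le_iff)
      then have "\<bar>a * s\<bar> ^ n / fact n * \<bar>pp n x y\<bar> \<le> \<bar>a * s\<bar> ^ n / fact n * 1"
        by (intro mult_left_mono) auto
      then show "norm (norm (\<alpha> n)) \<le> \<bar>a * s\<bar> ^ n / fact n"
        unfolding \<alpha>_def by (simp add: abs_mult power_abs)
    qed
  qed
  have sb: "summable (\<lambda>i. norm (\<beta> i))"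
    using summable_expb[of "- a * s"] unfolding \<beta>_def by (simp add: abs_mult power_abs)
  have inner: "(\<Sum>i\<le>n. \<alpha> i * \<beta> (n - i)) = s ^ n / fact n * gen_pow V E n x y" for n
  proof -
    have "s ^ n / fact n * gen_pow V E n x y = (\<Sum>j\<le>n. s ^ n / fact n * (real (n choose j) * (- a) ^ (n - j) * (a ^ j * pp j x y)))"
      unfolding binom[OF x] sum_distrib_left ..
    also have "\<dots> = (\<Sum>j\<le>n. \<alpha> j * \<beta> (n - j))"
    proof (intro sum.cong refl)
      fix j assume "j \<in> {..n}"
      then have jn: "j \<le> n" by simp
      have sn: "s ^ n = s ^ j * s ^ (n - j)" using jn by (simp add: power_add[symmetric])
      have bf: "real (n choose j) = fact n / (fact j * fact (n - j))" using binomial_fact[OF jn] by simp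
      show "s ^ n / fact n * (real (n choose j) * (- a) ^ (n - j) * (a ^ j * pp j x y)) = \<alpha> j * \<beta> (n - j)"
      proof -
        have pm: "(- a * s) ^ (n - j) = (- a) ^ (n - j) * s ^ (n - j)" "(a * s) ^ j = a ^ j * s ^ j"
          by (simp_all only: power_mult_distrib)
        show ?thesis unfolding \<alpha>_def \<beta>_def sn bf pm by (simp add: field_simps)
      qed
    qed
    finally show ?thesis by simp
  qed
  have "heat_kernel V E s x y = (\<Sum>n. \<Sum>i\<le>n. \<alpha> i * \<beta> (n - i))"
    unfolding heat_kernel_def inner ..
  also have "\<dots> = (\<Sum>i. \<alpha> i) * (\<Sum>i. \<beta> i)" using Cauchy_product[OF sa sb] by simp
  also have "(\<Sum>i. \<beta> i) = exp (- a * s)" unfolding \<beta>_def using sums_expr sums_unique by metis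
  finally show ?thesis unfolding \<alpha>_def by simp
qed


definition "bb = a * (1 - sqrt rho)"

lemma bb_pos: "bb > 0"
proof -
  have "sqrt rho < 1" using rho_lt1 rho_nonneg by (simp add: real_sqrt_lt_1_iff)
  then show ?thesis unfolding bb_def using dpos by simp
qed

lemma summable_alpha: "summable (\<lambda>i. c ^ i / fact i * pp i x y)"
proof (rule summable_comparison_test[OF _ summable_expb[of c]])
  show "\<exists>N. \<forall>n\<ge>N. norm (c ^ n / fact n * pp n x y) \<le> \<bar>c\<bar> ^ n / fact n"
  proof (intro exI allI impI)
    fix n :: nat
    have "\<bar>pp n x y\<bar> \<le> 1" using pp_nonneg pp_le1 by (simp add: abs_le_iff)
    then have "\<bar>c\<bar> ^ n / fact n * \<bar>pp n x y\<bar> \<le> \<bar>c\<bar> ^ n / fact n * 1"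
      by (intro mult_left_mono) auto
    then show "norm (c ^ n / fact n * pp n x y) \<le> \<bar>c\<bar> ^ n / fact n"
      by (simp add: abs_mult power_abs)
  qed
qed

lemma heat_lower: assumes x: "x \<in> V" and s: "s \<ge> 0" shows "exp (- a * s) \<le> heat_kernel V E s x x"
proof -
  have "sum (\<lambda>i. (a * s) ^ i / fact i * pp i x x) {0} \<le> (\<Sum>i. (a * s) ^ i / fact i * pp i x x)"
    using s dpos by (intro sum_le_suminf summable_alpha) (auto intro!: divide_nonneg_nonneg mult_nonneg_nonneg pp_nonneg)
  then have "1 \<le> (\<Sum>i. (a * s) ^ i / fact i * pp i x x)" by simp
  then show ?thesis unfolding heat_eq[OF x] by (simp add: mult_left_mono[of 1, simplified])
qed

lemma heat_upper: assumes x: "x \<in> V" and s: "s \<ge> 0"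
  shows "heat_kernel V E s x x \<le> 1 / real (card V) + exp (- bb * s)"
proof -
  define n where "n = real (card V)"
  define r where "r = sqrt rho"
  have "(\<Sum>i. (a * s) ^ i / fact i * pp i x x) \<le> (\<Sum>i. (a * s) ^ i / fact i * (1 / n) + (a * s * r) ^ i / fact i)"
  proof (rule suminf_le)
    fix i
    have "pp i x x \<le> 1 / n + r ^ i" using decay[OF x, of i] unfolding n_def r_def .
    moreover have "0 \<le> (a * s) ^ i / fact i" using s dpos by simp
    ultimately have "(a * s) ^ i / fact i * pp i x x \<le> (a * s) ^ i / fact i * (1 / n + r ^ i)"
      by (rule mult_left_mono)
    also have "\<dots> = (a * s) ^ i / fact i * (1 / n) + (a * s * r) ^ i / fact i"
    proof -
      have "(a * s * r) ^ i / fact i = (a * s) ^ i / fact i * r ^ i" by (simp add: power_mult_distrib)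
      then show ?thesis by (simp only: distrib_left)
    qed
    finally show "(a * s) ^ i / fact i * pp i x x \<le> (a * s) ^ i / fact i * (1 / n) + (a * s * r) ^ i / fact i" .
  next
    show "summable (\<lambda>i. (a * s) ^ i / fact i * pp i x x)" by (rule summable_alpha)
  next
    show "summable (\<lambda>i. (a * s) ^ i / fact i * (1 / n) + (a * s * r) ^ i / fact i)"
      using sums_add[OF sums_mult2[OF sums_expr[of "a * s"], of "1/n"] sums_expr[of "a * s * r"]] by (auto simp: sums_iff)
  qed
  also have "\<dots> = exp (a * s) * (1 / n) + exp (a * s * r)"
    using sums_add[OF sums_mult2[OF sums_expr[of "a * s"], of "1/n"] sums_expr[of "a * s * r"]] by (auto simp: sums_iff)
  finally have A: "(\<Sum>i. (a * s) ^ i / fact i * pp i x x) \<le> exp (a * s) * (1 / n) + exp (a * s * r)" .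
  have "heat_kernel V E s x x \<le> exp (- a * s) * (exp (a * s) * (1 / n) + exp (a * s * r))"
    unfolding heat_eq[OF x] by (rule mult_left_mono[OF A]) simp
  also have "\<dots> = (exp (- a * s) * exp (a * s)) * (1 / n) + exp (- a * s) * exp (a * s * r)"
    by (simp only: distrib_left mult.assoc)
  also have "exp (- a * s) * exp (a * s) = 1" by (simp flip: exp_add)
  also have "exp (- a * s) * exp (a * s * r) = exp (- a * s + a * s * r)" by (simp only: exp_add)
  also have "1 * (1 / n) = 1 / n" by simp
  also have "- a * s + a * s * r = - bb * s" unfolding bb_def r_def by (simp add: algebra_simps)
  finally show ?thesis unfolding n_def .
qed

lemma heat_cont: "continuous_on S (\<lambda>s. heat_kernel V E s x x)"
proof -
  define c where "c n = gen_pow V E n x x / fact n" for n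
  have eq: "(\<lambda>s. heat_kernel V E s x x) = (\<lambda>s. \<Sum>n. c n * s ^ n)"
    unfolding heat_kernel_def c_def by (intro ext suminf_cong) simp
  have sm: "summable (\<lambda>n. c n * y ^ n)" for y
  proof (rule summable_comparison_test[OF _ summable_expb[of "2 * d * y"]])
    show "\<exists>N. \<forall>n\<ge>N. norm (c n * y ^ n) \<le> \<bar>2 * d * y\<bar> ^ n / fact n"
    proof (intro exI allI impI)
      fix n :: nat
      have "\<bar>gen_pow V E n x x\<bar> * \<bar>y\<bar> ^ n / fact n \<le> (2 * d) ^ n * \<bar>y\<bar> ^ n / fact n"
        using gen_bound[of n x x] by (intro divide_right_mono mult_right_mono) auto
      then show "norm (c n * y ^ n) \<le> \<bar>2 * d * y\<bar> ^ n / fact n"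
        unfolding c_def using dpos by (simp add: abs_mult power_abs power_mult_distrib)
    qed
  qed
  show ?thesis unfolding eq
    by (intro continuous_at_imp_continuous_on ballI isCont_powser_converges_everywhere sm)
qed


definition "HI x t = integral {0..t} (\<lambda>s. heat_kernel V E s x x)"

lemma HI_int: "(\<lambda>s. heat_kernel V E s x x) integrable_on {u..v}"
  by (rule integrable_continuous_interval[OF heat_cont])

lemma card_pos: "real (card V) > 0" using fin ne by (simp add: card_gt_0_iff)

lemma HI_upper1: assumes x: "x \<in> V" and t: "0 \<le> t" shows "HI x t \<le> t / real (card V) + 1 / bb"
proof -
  define n where "n = real (card V)"
  have npos: "n > 0" unfolding n_def by (rule card_pos)
  have bpos: "bb > 0" by (rule bb_pos)
  have der: "((\<lambda>s. s / n - exp (- bb * s) / bb) has_vector_derivative (1 / n + exp (- bb * s))) (at s within {0..t})" for s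
  proof -
    have "((\<lambda>s. s / n - exp (- bb * s) / bb) has_real_derivative (1 / n + exp (- bb * s))) (at s within {0..t})"
      using bpos npos by (auto intro!: derivative_eq_intros simp: field_simps)
    then show ?thesis by (simp add: has_real_derivative_iff_has_vector_derivative)
  qed
  have FT: "((\<lambda>s. 1 / n + exp (- bb * s)) has_integral ((t / n - exp (- bb * t) / bb) - (0 / n - exp (- bb * 0) / bb))) {0..t}"
    by (rule fundamental_theorem_of_calculus[OF t der])
  have "HI x t \<le> integral {0..t} (\<lambda>s. 1 / n + exp (- bb * s))"
    unfolding HI_def
  proof (rule integral_le[OF HI_int])
    show "(\<lambda>s. 1 / n + exp (- bb * s)) integrable_on {0..t}" using FT by blast
    show "heat_kernel V E s x x \<le> 1 / n + exp (- bb * s)" if "s \<in> {0..t}" for s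
      using heat_upper[OF x, of s] that unfolding n_def by simp
  qed
  also have "\<dots> = t / n - exp (- bb * t) / bb + 1 / bb" using integral_unique[OF FT] by simp
  also have "\<dots> \<le> t / n + 1 / bb" using bpos by simp
  finally show ?thesis unfolding n_def .
qed

lemma HI_upper2: assumes x: "x \<in> V" and t: "0 \<le> t" shows "HI x t \<le> 2 * t"
proof -
  have "HI x t \<le> integral {0..t} (\<lambda>s. 2)"
    unfolding HI_def
  proof (rule integral_le[OF HI_int])
    show "(\<lambda>s. 2::real) integrable_on {0..t}" by (rule integrable_continuous_interval) (rule continuous_on_const)
    show "heat_kernel V E s x x \<le> 2" if "s \<in> {0..t}" for s
    proof -
      have "1 / real (card V) \<le> 1" using card_pos by simp
      moreover have "exp (- bb * s) \<le> 1" using that bb_pos by simp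
      moreover have "heat_kernel V E s x x \<le> 1 / real (card V) + exp (- bb * s)" using heat_upper[OF x, of s] that by simp
      ultimately show ?thesis by linarith
    qed
  qed
  also have "\<dots> = 2 * t" using t by simp
  finally show ?thesis .
qed

lemma HI_lower: assumes x: "x \<in> V" and t: "0 < t" shows "min t 1 * exp (- a) \<le> HI x t"
proof -
  have low: "integral {0..u} (\<lambda>s. heat_kernel V E s x x) \<ge> u * exp (- a)" if u: "0 \<le> u" "u \<le> 1" for u
  proof -
    have "integral {0..u} (\<lambda>s. exp (- a)) \<le> integral {0..u} (\<lambda>s. heat_kernel V E s x x)"
    proof (rule integral_le[OF _ HI_int])
      show "(\<lambda>s. exp (- a)) integrable_on {0..u}" by (rule integrable_continuous_interval) (rule continuous_on_const)
      show "exp (- a) \<le> heat_kernel V E s x x" if "s \<in> {0..u}" for s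
      proof -
        have "exp (- a) \<le> exp (- a * s)" using that u dpos by (simp add: mult_left_le)
        also have "\<dots> \<le> heat_kernel V E s x x" using heat_lower[OF x, of s] that by simp
        finally show ?thesis .
      qed
    qed
    then show ?thesis using u by simp
  qed
  show ?thesis
  proof (cases "t \<le> 1")
    case True then show ?thesis using low[of t] t unfolding HI_def by simp
  next
    case False
    have "HI x t = integral {0..1} (\<lambda>s. heat_kernel V E s x x) + integral {1..t} (\<lambda>s. heat_kernel V E s x x)"
      unfolding HI_def using False Henstock_Kurzweil_Integration.integral_combine[where a=0 and c=1 and b=t and f="\<lambda>s. heat_kernel V E s x x", OF _ _ HI_int] by simp
    moreover have "integral {1..t} (\<lambda>s. heat_kernel V E s x x) \<ge> 0"
    proof (rule integral_nonneg[OF HI_int])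
      fix s assume "s \<in> {1..t}"
      then show "0 \<le> heat_kernel V E s x x" using heat_lower[OF x, of s] by (meson atLeastAtMost_iff exp_ge_zero order_trans zero_le_one)
    qed
    ultimately show ?thesis using low[of 1] False by simp
  qed
qed


lemma bb_eq: "bb = 2 * d * (1 - sqrt (max 0 (1 - \<kappa>\<^sup>2 / (16 * d\<^sup>2))))"
  unfolding bb_def rho_def ..

lemma final: assumes t: "0 < t" "t \<le> real (card V)"
  shows "Max ((\<lambda>x. integral {0..t} (\<lambda>s. heat_kernel V E s x x)) ` V)
        / Min ((\<lambda>x. integral {0..t} (\<lambda>s. heat_kernel V E s x x)) ` V)
      + Max ((\<lambda>x. integral {0..t} (\<lambda>s. heat_kernel V E s x x)) ` V) < (3 + 1 / bb) * exp a + (1 + 1 / bb) + 1"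
proof -
  define f where "f x = integral {0..t} (\<lambda>s. heat_kernel V E s x x)" for x
  have fH: "f x = HI x t" for x unfolding f_def HI_def ..
  define U where "U = Max (f ` V)"
  define L where "L = Min (f ` V)"
  have finI: "finite (f ` V)" "f ` V \<noteq> {}" using fin ne by auto
  have bpos: "bb > 0" by (rule bb_pos)
  have n1: "t / real (card V) \<le> 1" using t card_pos by simp
  have U1: "U \<le> 2 * t" unfolding U_def using finI HI_upper2 t by (auto simp: fH)
  have U2: "U \<le> 1 + 1 / bb" unfolding U_def
  proof (subst Max_le_iff[OF finI], intro ballI)
    fix y assume "y \<in> f ` V"
    then obtain x where x: "x \<in> V" "y = f x" by auto
    then have "y \<le> t / real (card V) + 1 / bb" using HI_upper1[of x t] t by (simp add: fH)
    then show "y \<le> 1 + 1 / bb" using n1 by linarith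
  qed
  have L1: "min t 1 * exp (- a) \<le> L" unfolding L_def using finI HI_lower[of _ t] t by (auto simp: fH)
  have Lpos: "0 < min t 1 * exp (- a)" using t by simp
  have ea: "exp (- a) * exp a = 1" by (simp flip: exp_add)
  have R: "U / L \<le> (3 + 1 / bb) * exp a"
  proof -
    have Unn: "U \<ge> 0"
    proof -
      obtain x where "x \<in> V" using ne by auto
      then have "min t 1 * exp (- a) \<le> f x" using HI_lower[of x t] t by (simp add: fH)
      then show ?thesis unfolding U_def using finI Lpos \<open>x \<in> V\<close>
        by (meson Max_ge image_eqI less_le_trans not_le order.strict_implies_order)
    qed
    have "U / L \<le> U / (min t 1 * exp (- a))" using L1 Lpos Unn by (intro divide_left_mono) auto
    also have "\<dots> \<le> (3 + 1 / bb) * exp a"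
    proof (cases "t \<le> 1")
      case True
      then have "min t 1 = t" by simp
      then have "U / (min t 1 * exp (- a)) \<le> 2 * t / (t * exp (- a))"
        using U1 Lpos divide_right_mono[OF U1, of "t * exp (- a)"] by simp
      also have "\<dots> = 2 * exp a" using t by (simp add: exp_minus field_simps)
      also have "\<dots> \<le> (3 + 1 / bb) * exp a" using bpos by (intro mult_right_mono) auto
      finally show ?thesis .
    next
      case False
      then have "min t 1 = 1" by simp
      then have "U / (min t 1 * exp (- a)) \<le> (1 + 1 / bb) / exp (- a)"
        using divide_right_mono[OF U2, of "exp (- a)"] by simp
      also have "\<dots> = (1 + 1 / bb) * exp a" by (simp add: exp_minus field_simps)
      also have "\<dots> \<le> (3 + 1 / bb) * exp a" by (intro mult_right_mono) auto
      finally show ?thesis .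
    qed
    finally show ?thesis .
  qed
  have "U / L + U < (3 + 1 / bb) * exp a + (1 + 1 / bb) + 1" using R U2 by linarith
  then show ?thesis unfolding U_def L_def f_def .
qed

end

lemma expn_from:
  assumes "vertex_expansion V E > ereal k" "S \<subseteq> V" "0 < card S" "real (card S) \<le> real (card V) / 2"
  shows "k * real (card S) \<le> real (card (vboundary V E S))"
proof -
  have "vertex_expansion V E \<le> ereal (real (card (vboundary V E S)) / real (card S))"
    unfolding vertex_expansion_def using assms(2-4) by (intro Inf_lower) blast
  then have "ereal k < ereal (real (card (vboundary V E S)) / real (card S))" using assms(1) by (rule order.strict_trans2[rotated])
  then have "k < real (card (vboundary V E S)) / real (card S)" by simp
  then show ?thesis using assms(3) by (simp add: pos_less_divide_eq less_imp_le)
qed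

theorem lemma2p9:
  fixes \<kappa>0 dbar :: real
  assumes "\<kappa>0 > 0" and "dbar > 0"
  shows "\<exists>C::real. \<forall>V E (t::real).
    simple_graph V E \<and> connected_graph V E \<and> (\<forall>x\<in>V. real (degree V E x) \<le> dbar)
    \<and> vertex_expansion V E > ereal \<kappa>0 \<and> 0 < t \<and> t \<le> real (card V) \<longrightarrow>
      (Max ((\<lambda>x. integral {0..t} (\<lambda>s. heat_kernel V E s x x)) ` V))
        / (Min ((\<lambda>x. integral {0..t} (\<lambda>s. heat_kernel V E s x x)) ` V))
      + Max ((\<lambda>x. integral {0..t} (\<lambda>s. heat_kernel V E s x x)) ` V) < C"
proof -
  define b0 where "b0 = 2 * dbar * (1 - sqrt (max 0 (1 - \<kappa>0\<^sup>2 / (16 * dbar\<^sup>2))))"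
  show ?thesis
  proof (intro exI allI impI)
    fix V E and t :: real
    assume H: "simple_graph V E \<and> connected_graph V E \<and> (\<forall>x\<in>V. real (degree V E x) \<le> dbar)
    \<and> vertex_expansion V E > ereal \<kappa>0 \<and> 0 < t \<and> t \<le> real (card V)"
    interpret grk V E dbar \<kappa>0
    proof
      show "finite V" "V \<noteq> {}" using H unfolding simple_graph_def by auto
      show "E x y \<Longrightarrow> E y x" for x y using H unfolding simple_graph_def by auto
      show "\<not> E x x" for x using H unfolding simple_graph_def by auto
      show "E x y \<Longrightarrow> x \<in> V \<and> y \<in> V" for x y using H unfolding simple_graph_def by auto
      show "x \<in> V \<Longrightarrow> real (degree V E x) \<le> dbar" for x using H by auto
      show "dbar > 0" "\<kappa>0 > 0" using assms by auto
      show "S \<subseteq> V \<Longrightarrow> 0 < card S \<Longrightarrow> real (card S) \<le> real (card V) / 2 \<Longrightarrow> \<kappa>0 * real (card S) \<le> real (card (vboundary V E S))" for S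
        using expn_from[of \<kappa>0 V E S] H by auto
    qed
    show "(Max ((\<lambda>x. integral {0..t} (\<lambda>s. heat_kernel V E s x x)) ` V))
        / (Min ((\<lambda>x. integral {0..t} (\<lambda>s. heat_kernel V E s x x)) ` V))
      + Max ((\<lambda>x. integral {0..t} (\<lambda>s. heat_kernel V E s x x)) ` V) < (3 + 1 / b0) * exp (2 * dbar) + (1 + 1 / b0) + 1"
      using final[of t] H unfolding bb_eq b0_def by auto
  qed
qed

end
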